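(* Let $F\subset\mathbb G^d$ be a nonempty closed set and $\tau=\tau_F$ the associated quasimeasure, with generating series $\sum_{\mathbf n}\widehat\tau_{\mathbf n}W_{\mathbf n}$ and partial sums $S_{\mathbf N}$. Then for every $\mathbf g\notin F$ there is $w=w(\mathbf g)\in\mathbb N_0$ such that $S_{2^w\mathbf M}(\mathbf g)=0$ for all $\mathbf M\in\mathbb N^d$.
   Context: Fix $d\ge2$. $\mathbb G$ is the dyadic group: sequences $g=(g_k)_{k\ge0}$, $g_k\in\{0,1\}$, coordinatewise addition mod 2, product topology; $\mathbb G^d$ its $d$-th power. For $n\in\mathbb N_0$, $n=\sum_kn_k2^k$, $n_k\in\{0,1\}$. Dyadic interval of rank $k$: $\Delta^{(k)}_m=\{g: g_t=m_{k-1-t},\ 0\le t<k\}$; dyadic cube $\Delta^{(k)}_{\mathbf m}=\prod_l\Delta^{(k)}_{m^l}$. Vector order coordinatewise, $\mathbf 1=(1,\dots,1)$. Walsh functions $W_n(g)=\prod_k(-1)^{g_kn_k}$, $W_{\mathbf n}(\mathbf g)=\prod_lW_{n^l}(g^l)$; $W^{(k)}_{\mathbf n\mathbf m}$ is the constant value of $W_{\mathbf n}$ on $\Delta^{(k)}_{\mathbf m}$ ($\mathbf n,\mathbf m<2^k\mathbf 1$). Partial sums $S_{\mathbf N}=\sum_{\mathbf n<\mathbf N}a_{\mathbf n}W_{\mathbf n}$. Quasimeasure: $\tau$ on dyadic cubes with $\tau(\Delta^{(k)}_{\mathbf m})=\sum_{\boldsymbol\sigma\in\{0,1\}^d}\tau(\Delta^{(k+1)}_{2\mathbf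 m+\boldsymbol\sigma})$; Fourier–Walsh coefficients $\widehat\tau_{\mathbf n}=\sum_{\mathbf m<2^k\mathbf 1}W^{(k)}_{\mathbf n\mathbf m}\tau(\Delta^{(k)}_{\mathbf m})$ ($\mathbf n<2^k\mathbf 1$); the series generating $\tau$ is $\sum\widehat\tau_{\mathbf n}W_{\mathbf n}$. $\tau_F$ is the unique nonnegative quasimeasure with $\tau_F(\mathbb G^d)=1$, $\tau_F(\Delta)=0$ iff $\Delta\cap F=\emptyset$, and such that if $\Delta^{(k)}_{\mathbf m}$ meets $F$ and exactly $M$ of its $2^d$ children $\Delta^{(k+1)}_{2\mathbf m+\boldsymbol\sigma}$ meet $F$, each of those has value $\tau_F(\Delta^{(k)}_{\mathbf m})/M$ and the others $0$. *)

theory Defs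
  imports "HOL-Analysis.Analysis"
begin

text \<open>The dyadic group: sequences of binary digits, as nat \<Rightarrow> bool (True = 1).
  A point of G^d is a function from a finite index type 'd (with CARD('d) = d)
  into the dyadic group.\<close>

type_synonym dyadic = "nat \<Rightarrow> bool"

definition dyadic_topology :: "('d \<Rightarrow> dyadic) topology" where
  "dyadic_topology = product_topology
     (\<lambda>_. product_topology (\<lambda>_. discrete_topology (UNIV :: bool set)) UNIV) UNIV"

definition dyadic_interval :: "nat \<Rightarrow> nat \<Rightarrow> dyadic set" where
  "dyadic_interval k m = {g. \<forall>t<k. g t = bit m (k - 1 - t)}"

definition dyadic_cube :: "nat \<Rightarrow> ('d \<Rightarrow> nat) \<Rightarrow> ('d \<Rightarrow> dyadic) set" where
  "dyadic_cube k m = {g. \<forall>l. g l \<in> dyadic_interval k (m l)}"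

text \<open>Walsh functions. Only digits k < n of n can be nonzero.\<close>
definition walsh :: "nat \<Rightarrow> dyadic \<Rightarrow> real" where
  "walsh n g = (\<Prod>k<n. if bit n k \<and> g k then -1 else 1)"

definition walsh_vec :: "('d::finite \<Rightarrow> nat) \<Rightarrow> ('d \<Rightarrow> dyadic) \<Rightarrow> real" where
  "walsh_vec n g = (\<Prod>l\<in>UNIV. walsh (n l) (g l))"

definition cube_point :: "nat \<Rightarrow> ('d \<Rightarrow> nat) \<Rightarrow> ('d \<Rightarrow> dyadic)" where
  "cube_point k m = (\<lambda>l t. t < k \<and> bit (m l) (k - 1 - t))"

text \<open>W^{(k)}_{n m}: the (constant) value of W_n on the cube of rank k with index m.\<close>
definition walsh_cube :: "nat \<Rightarrow> ('d::finite \<Rightarrow> nat) \<Rightarrow> ('d \<Rightarrow> nat) \<Rightarrow> real" where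
  "walsh_cube k n m = walsh_vec n (cube_point k m)"

text \<open>Children of a cube: indices 2m + sigma, sigma in {0,1}^d.\<close>
definition child_signs :: "('d \<Rightarrow> nat) set" where
  "child_signs = {\<sigma>. \<forall>l. \<sigma> l \<le> 1}"

text \<open>The quasimeasure tau_F on dyadic cubes, by the splitting rule of the paper:
  the whole space gets 1; a cube meeting F passes its mass equally to those of its
  2^d children that meet F; cubes not meeting F get 0.\<close>
fun tauF :: "('d::finite \<Rightarrow> dyadic) set \<Rightarrow> nat \<Rightarrow> ('d \<Rightarrow> nat) \<Rightarrow> real" where
  "tauF F 0 m = (if dyadic_cube 0 m \<inter> F = {} then 0 else 1)"
| "tauF F (Suc k) m =
     (if dyadic_cube (Suc k) m \<inter> F = {} then 0
      else tauF F k (\<lambda>l. m l div 2) /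
        real (card {\<sigma> \<in> child_signs.
           dyadic_cube (Suc k) (\<lambda>l. 2 * (m l div 2) + \<sigma> l) \<inter> F \<noteq> {}}))"

text \<open>Fourier--Walsh coefficients of a quasimeasure tau, computed at rank
  k = max_l n_l (which satisfies n < 2^k 1); the value does not depend on the
  admissible rank for a quasimeasure.\<close>
definition fw_coeff :: "(nat \<Rightarrow> ('d::finite \<Rightarrow> nat) \<Rightarrow> real) \<Rightarrow> ('d \<Rightarrow> nat) \<Rightarrow> real" where
  "fw_coeff \<tau> n = (let k = Max (range n) in
     (\<Sum>m\<in>{m. \<forall>l. m l < 2 ^ k}. walsh_cube k n m * \<tau> k m))"

definition partial_sum :: "(('d::finite \<Rightarrow> nat) \<Rightarrow> real) \<Rightarrow> ('d \<Rightarrow> nat) \<Rightarrow> ('d \<Rightarrow> dyadic) \<Rightarrow> real" where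
  "partial_sum a N g = (\<Sum>n\<in>{n. \<forall>l. n l < N l}. a n * walsh_vec n g)"

end

theory Submission
  imports Defs
begin

lemma nbhd:
  fixes F :: "('d::finite \<Rightarrow> dyadic) set"
  assumes "closedin dyadic_topology F" "g \<notin> F"
  shows "\<exists>w. \<forall>h. (\<forall>l t. t < w \<longrightarrow> h l t = g l t) \<longrightarrow> h \<notin> F"
proof -
  have ts: "topspace (dyadic_topology :: ('d \<Rightarrow> dyadic) topology) = UNIV"
    by (simp add: dyadic_topology_def PiE_UNIV_domain)
  have "openin dyadic_topology (- F)"
    using assms(1) ts unfolding closedin_def by (simp add: Compl_eq_Diff_UNIV)
  then have "openin (product_topology (\<lambda>_. product_topology (\<lambda>_. discrete_topology (UNIV :: bool set)) UNIV) UNIV) (- F)"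
    by (simp add: dyadic_topology_def)
  then have H: "\<forall>x\<in>- F. \<exists>U. finite {i \<in> UNIV. U i \<noteq> topspace (product_topology (\<lambda>_. discrete_topology (UNIV :: bool set)) UNIV)} \<and>
                 (\<forall>i \<in> UNIV. openin (product_topology (\<lambda>_. discrete_topology (UNIV :: bool set)) UNIV) (U i)) \<and> x \<in> Pi\<^sub>E UNIV U \<and> Pi\<^sub>E UNIV U \<subseteq> - F"
    by (rule openin_product_topology_alt[THEN iffD1])
  have "g \<in> - F" using assms(2) by simp
  from bspec[OF H this] obtain U where
     U: "\<forall>i \<in> UNIV. openin (product_topology (\<lambda>_. discrete_topology (UNIV :: bool set)) UNIV) (U i)"
     "g \<in> Pi\<^sub>E UNIV U" "Pi\<^sub>E UNIV U \<subseteq> - F"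
    by (elim exE conjE) (rule that)
  have "\<forall>l. \<exists>V. finite {t. V t \<noteq> UNIV} \<and> g l \<in> Pi\<^sub>E UNIV V \<and> Pi\<^sub>E UNIV V \<subseteq> U l"
  proof
    fix l
    have "g l \<in> U l" using U(2) by (simp add: PiE_UNIV_domain Pi_iff)
    moreover have "openin (product_topology (\<lambda>_. discrete_topology (UNIV :: bool set)) UNIV) (U l)"
      using U(1) by simp
    ultimately have "\<exists>V. finite {t \<in> UNIV. V t \<noteq> topspace (discrete_topology (UNIV :: bool set))} \<and>
                 (\<forall>i \<in> UNIV. openin (discrete_topology (UNIV :: bool set)) (V i)) \<and> g l \<in> Pi\<^sub>E UNIV V \<and> Pi\<^sub>E UNIV V \<subseteq> U l"
      unfolding openin_product_topology_alt by (rule bspec[rotated])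
    then obtain V where "finite {t \<in> UNIV. V t \<noteq> topspace (discrete_topology (UNIV :: bool set))}"
      "g l \<in> Pi\<^sub>E UNIV V" "Pi\<^sub>E UNIV V \<subseteq> U l"
      by (elim exE conjE) (rule that)
    then show "\<exists>V. finite {t. V t \<noteq> UNIV} \<and> g l \<in> Pi\<^sub>E UNIV V \<and> Pi\<^sub>E UNIV V \<subseteq> U l"
      by (intro exI[of _ V]) simp
  qed
  then obtain V where V: "\<And>l. finite {t. V l t \<noteq> UNIV}" "\<And>l. g l \<in> Pi\<^sub>E UNIV (V l)"
    "\<And>l. Pi\<^sub>E UNIV (V l) \<subseteq> U l" by metis
  have "finite (\<Union>l. {t. V l t \<noteq> UNIV})" using V(1) by auto
  then obtain w where w: "(\<Union>l. {t. V l t \<noteq> UNIV}) \<subseteq> {..<w}" using finite_nat_bounded by blast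
  show ?thesis
  proof (intro exI allI impI)
    fix h :: "'d \<Rightarrow> dyadic" assume h: "\<forall>l t. t < w \<longrightarrow> h l t = g l t"
    have "h l \<in> Pi\<^sub>E UNIV (V l)" for l
    proof -
      have "h l t \<in> V l t" for t
      proof (cases "V l t = UNIV")
        case False
        then have "t < w" using w by auto
        then show ?thesis using h V(2)[of l] by (auto simp: PiE_UNIV_domain)
      qed simp
      then show ?thesis by (simp add: PiE_UNIV_domain)
    qed
    then have "h \<in> Pi\<^sub>E UNIV U" using V(3) unfolding PiE_UNIV_domain by blast
    then show "h \<notin> F" using U(3) by auto
  qed
qed


lemma bit_lt_pow: "(n::nat) < 2 ^ k \<Longrightarrow> bit n j \<Longrightarrow> j < k"
  by (metis bit_take_bit_iff take_bit_nat_eq_self_iff)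

lemma bit_lt_self: "bit (n::nat) j \<Longrightarrow> j < n"
  using bit_lt_pow[of n n j] less_exp by blast

lemma walsh_ext:
  assumes "\<forall>k\<ge>B. \<not> bit a k"
  shows "walsh a y = (\<Prod>k<B. if bit a k \<and> y k then -1 else 1)"
proof -
  have "walsh a y = (\<Prod>k<max a B. if bit a k \<and> y k then -1 else 1)"
    unfolding walsh_def
    by (rule prod.mono_neutral_left) (auto dest: bit_lt_self)
  also have "\<dots> = (\<Prod>k<B. if bit a k \<and> y k then -1 else 1)"
    by (rule prod.mono_neutral_right) (use assms in auto)
  finally show ?thesis .
qed

lemma bit_pow2: "bit (2 ^ t :: nat) k = (k = t)"
  by (simp only: bit_exp_iff possible_bit_def) simp

lemma xor_bit_t: "bit (xor (n::nat) (2 ^ t)) k = (if k = t then \<not> bit n k else bit n k)"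
  unfolding bit_xor_iff bit_pow2 by (cases "k = t") simp_all

lemma sign_aux: "(if \<not> a \<and> b then -1 else 1) * (P::real) = ((if a \<and> b then -1 else 1) * P) * (if b then -1 else 1)"
  by (cases a; cases b) simp_all

lemma walsh_flip:
  "walsh (xor n (2 ^ t)) y = walsh n y * (if y t then -1 else 1)"
proof -
  define B where "B = n + t + 1"
  have tB: "t \<in> {..<B}" by (simp add: B_def)
  have hb: "\<not> bit n k" if "k \<ge> B" for k
  proof
    assume "bit n k" then have "k < n" by (rule bit_lt_self)
    then show False using that by (simp add: B_def)
  qed
  have e1: "walsh (xor n (2 ^ t)) y = (\<Prod>k<B. if bit (xor n (2 ^ t)) k \<and> y k then -1 else 1)"
  proof (rule walsh_ext, intro allI impI)
    fix k assume "B \<le> k"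
    moreover have "k \<noteq> t" using calculation by (simp add: B_def)
    ultimately show "\<not> bit (xor n (2 ^ t)) k" using hb by (simp only: xor_bit_t if_False) blast
  qed
  have e2: "(\<Prod>k<B. if bit (xor n (2 ^ t)) k \<and> y k then -1 else 1) = (if bit (xor n (2 ^ t)) t \<and> y t then -1 else 1) *
      (\<Prod>k\<in>{..<B} - {t}. if bit (xor n (2 ^ t)) k \<and> y k then (-1::real) else 1)"
    using tB by (rule prod.remove[rotated]) simp
  have e3: "(\<Prod>k\<in>{..<B} - {t}. if bit (xor n (2 ^ t)) k \<and> y k then -1 else 1)
     = (\<Prod>k\<in>{..<B} - {t}. if bit n k \<and> y k then (-1::real) else 1)"
    by (rule prod.cong) (simp_all add: xor_bit_t)
  have e4: "walsh n y = (\<Prod>k<B. if bit n k \<and> y k then -1 else 1)"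
    using hb by (intro walsh_ext) blast
  have e5: "(\<Prod>k<B. if bit n k \<and> y k then -1 else 1) = (if bit n t \<and> y t then -1 else 1) *
      (\<Prod>k\<in>{..<B} - {t}. if bit n k \<and> y k then (-1::real) else 1)"
    using tB by (rule prod.remove[rotated]) simp
  have e6: "bit (xor n (2 ^ t)) t = (\<not> bit n t)" by (simp add: xor_bit_t)
  have "walsh (xor n (2 ^ t)) y = (if \<not> bit n t \<and> y t then -1 else 1) *
      (\<Prod>k\<in>{..<B} - {t}. if bit n k \<and> y k then (-1::real) else 1)"
    unfolding e1 e2 e3 e6 by (rule refl)
  moreover have "walsh n y = (if bit n t \<and> y t then -1 else 1) *
      (\<Prod>k\<in>{..<B} - {t}. if bit n k \<and> y k then (-1::real) else 1)"
    unfolding e4 e5 by (rule refl)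
  ultimately show ?thesis using sign_aux by metis
qed

definition flipv :: "('d \<Rightarrow> nat) \<Rightarrow> 'd \<Rightarrow> nat \<Rightarrow> ('d \<Rightarrow> nat)" where
  "flipv n l0 t = n(l0 := xor (n l0) (2 ^ t))"

lemma walsh_vec_split:
  fixes m :: "'d::finite \<Rightarrow> nat"
  shows "walsh_vec m y = walsh (m l0) (y l0) * (\<Prod>l\<in>UNIV - {l0}. walsh (m l) (y l))"
  unfolding walsh_vec_def by (rule prod.remove) auto

lemma walsh_vec_flip:
  fixes n :: "'d::finite \<Rightarrow> nat"
  shows "walsh_vec (flipv n l0 t) y = walsh_vec n y * (if y l0 t then -1 else 1)"
proof -
  have "(\<Prod>l\<in>UNIV - {l0}. walsh (flipv n l0 t l) (y l)) = (\<Prod>l\<in>UNIV - {l0}. walsh (n l) (y l))"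
    by (rule prod.cong) (auto simp: flipv_def)
  moreover have "flipv n l0 t l0 = xor (n l0) (2 ^ t)" by (simp add: flipv_def)
  ultimately show ?thesis
    unfolding walsh_vec_split[of "flipv n l0 t" y l0] walsh_vec_split[of n y l0]
    by (simp add: walsh_flip)
qed

lemma flipv_flipv[simp]: "flipv (flipv n l0 t) l0 t = n"
  by (auto simp: flipv_def xor.assoc)

lemma box_finite: "finite {n::'d::finite \<Rightarrow> nat. \<forall>l. n l < N l}"
proof -
  have "{n::'d \<Rightarrow> nat. \<forall>l. n l < N l} = Pi\<^sub>E UNIV (\<lambda>l. {..<N l})"
    by (auto simp: PiE_UNIV_domain)
  then show ?thesis by (simp add: finite_PiE)
qed

lemma flip_in_box:
  assumes "t < w" "a < 2 ^ w * M"
  shows "xor a (2 ^ t) < 2 ^ w * (M::nat)"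
proof -
  have "drop_bit w (xor a (2 ^ t)) = drop_bit w a"
    using assms(1) by (simp add: drop_bit_exp_eq)
  then have eq: "xor a (2 ^ t) div 2 ^ w = a div 2 ^ w" by (simp add: drop_bit_eq_div)
  have "a div 2 ^ w < M" using assms(2) by (metis div_less_iff_less_mult mult.commute zero_less_numeral zero_less_power)
  then have "xor a (2 ^ t) div 2 ^ w < M" using eq by simp
  then show ?thesis by (metis div_less_iff_less_mult mult.commute zero_less_numeral zero_less_power)
qed

lemma sum_kills:
  fixes x g :: "'d::finite \<Rightarrow> dyadic"
  assumes "t < w" "x l0 t \<noteq> g l0 t"
  shows "(\<Sum>n\<in>{n. \<forall>l. n l < 2 ^ w * M l}. c * walsh_vec n x * walsh_vec n g) = 0"
proof -
  let ?A = "{n::'d \<Rightarrow> nat. \<forall>l. n l < 2 ^ w * M l}"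
  let ?f = "\<lambda>n. c * walsh_vec n x * walsh_vec n g"
  have mem: "flipv n l0 t l < 2 ^ w * M l" if "\<forall>l. n l < 2 ^ w * M l" for n l
    using that flip_in_box[OF assms(1)] by (cases "l = l0") (auto simp: flipv_def)
  have "sum ?f ?A = sum (\<lambda>n. ?f (flipv n l0 t)) ?A"
    by (rule sum.reindex_bij_witness[where i="\<lambda>n. flipv n l0 t" and j="\<lambda>n. flipv n l0 t"])
      (auto simp: mem)
  also have "\<dots> = sum (\<lambda>n. - ?f n) ?A"
    using assms(2) by (intro sum.cong) (auto simp: walsh_vec_flip)
  finally show ?thesis by (simp add: sum_negf)
qed


lemma cs_le: "\<sigma> \<in> child_signs \<Longrightarrow> \<sigma> l \<le> 1"
  by (simp add: child_signs_def)

lemma child_div: "\<sigma> \<in> child_signs \<Longrightarrow> (\<lambda>l. (2 * m l + \<sigma> l) div 2) = m"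
proof
  fix l assume "\<sigma> \<in> child_signs"
  then have "\<sigma> l \<le> 1" by (rule cs_le)
  then show "(2 * m l + \<sigma> l) div 2 = m l" by (cases "\<sigma> l") auto
qed

lemma child_div1: "\<sigma> \<in> child_signs \<Longrightarrow> (2 * m l + \<sigma> l) div 2 = (m l::nat)"
  using child_div[of \<sigma> m] by metis

lemma finite_cs: "finite (child_signs :: ('d::finite \<Rightarrow> nat) set)"
proof -
  have "child_signs \<subseteq> {\<sigma>::'d \<Rightarrow> nat. \<forall>l. \<sigma> l < 2}"
  proof (intro subsetI CollectI allI)
    fix \<sigma> :: "'d \<Rightarrow> nat" and l assume "\<sigma> \<in> child_signs"
    then have "\<sigma> l \<le> 1" by (rule cs_le)
    then show "\<sigma> l < 2" by simp
  qed
  then show ?thesis by (rule finite_subset[OF _ box_finite])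
qed

lemma cube_cover:
  assumes "h \<in> dyadic_cube k m"
  shows "\<exists>\<sigma>\<in>child_signs. h \<in> dyadic_cube (Suc k) (\<lambda>l. 2 * m l + \<sigma> l)"
proof (intro bexI)
  let ?\<sigma> = "\<lambda>l. if h l k then 1 else (0::nat)"
  show "?\<sigma> \<in> child_signs" by (simp add: child_signs_def)
  show "h \<in> dyadic_cube (Suc k) (\<lambda>l. 2 * m l + ?\<sigma> l)"
    unfolding dyadic_cube_def dyadic_interval_def
  proof (intro CollectI allI impI)
    fix l t assume t: "t < Suc k"
    show "h l t = bit (2 * m l + ?\<sigma> l) (Suc k - 1 - t)"
    proof (cases "t = k")
      case True then show ?thesis by (simp add: bit_0)
    next
      case False
      then have "Suc k - 1 - t = Suc (k - 1 - t)" using t by auto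
      moreover have "(2 * m l + ?\<sigma> l) div 2 = m l" by simp
      moreover have "h l t = bit (m l) (k - 1 - t)"
        using assms t False unfolding dyadic_cube_def dyadic_interval_def by auto
      ultimately show ?thesis by (simp add: bit_Suc)
    qed
  qed
qed

lemma tau_zero: "dyadic_cube k m \<inter> F = {} \<Longrightarrow> tauF F k m = 0"
  by (cases k) auto

lemma tau_add:
  fixes F :: "('d::finite \<Rightarrow> dyadic) set"
  shows "tauF F k m = (\<Sum>\<sigma>\<in>child_signs. tauF F (Suc k) (\<lambda>l. 2 * m l + \<sigma> l))"
proof -
  define C where "C = {\<sigma> \<in> child_signs. dyadic_cube (Suc k) (\<lambda>l. 2 * m l + \<sigma> l) \<inter> F \<noteq> {}}"
  have fC: "finite C" unfolding C_def using finite_cs by auto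
  have tm: "tauF F (Suc k) (\<lambda>l. 2 * m l + \<sigma> l) = (if \<sigma> \<in> C then tauF F k m / real (card C) else 0)"
    if "\<sigma> \<in> child_signs" for \<sigma>
    using that by (simp only: tauF.simps child_div1) (simp add: C_def)
  have "(\<Sum>\<sigma>\<in>child_signs. tauF F (Suc k) (\<lambda>l. 2 * m l + \<sigma> l))
      = (\<Sum>\<sigma>\<in>child_signs. if \<sigma> \<in> C then tauF F k m / real (card C) else 0)"
    by (rule sum.cong[OF refl]) (rule tm)
  also have "\<dots> = (\<Sum>\<sigma>\<in>C. tauF F k m / real (card C))"
  proof -
    have CS: "C \<subseteq> child_signs" unfolding C_def by blast
    have "child_signs \<inter> C = C" using CS by blast
    then show ?thesis
      using sum.inter_restrict[OF finite_cs, of "\<lambda>_. tauF F k m / real (card C)" C] by simp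
  qed
  also have "\<dots> = (if C = {} then 0 else tauF F k m)"
    using fC by (auto simp: card_eq_0_iff)
  also have "\<dots> = tauF F k m"
  proof (cases "C = {}")
    case True
    have "dyadic_cube k m \<inter> F = {}"
    proof (rule ccontr)
      assume "dyadic_cube k m \<inter> F \<noteq> {}"
      then obtain h where "h \<in> dyadic_cube k m" "h \<in> F" by blast
      then show False using cube_cover True unfolding C_def by blast
    qed
    then show ?thesis using True tau_zero by simp
  qed simp
  finally show ?thesis by simp
qed

lemma walsh_cube_child:
  fixes n :: "'d::finite \<Rightarrow> nat"
  assumes n: "\<forall>l. n l < 2 ^ k" and s: "\<sigma> \<in> child_signs"
  shows "walsh_cube (Suc k) n (\<lambda>l. 2 * m l + \<sigma> l) = walsh_cube k n m"
  unfolding walsh_cube_def walsh_vec_def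
proof (rule prod.cong[OF refl])
  fix l
  show "walsh (n l) (cube_point (Suc k) (\<lambda>l. 2 * m l + \<sigma> l) l) = walsh (n l) (cube_point k m l)"
    unfolding walsh_def
  proof (rule prod.cong[OF refl])
    fix j
    have "bit (n l) j \<Longrightarrow> j < k" using n bit_lt_pow by blast
    moreover have "j < k \<Longrightarrow> bit (2 * m l + \<sigma> l) (Suc k - 1 - j) = bit (m l) (k - 1 - j)"
    proof -
      assume j: "j < k"
      then have "Suc k - 1 - j = Suc (k - 1 - j)" by auto
      moreover have "(2 * m l + \<sigma> l) div 2 = m l" using child_div[OF s, of m] by metis
      ultimately show ?thesis by (simp add: bit_Suc)
    qed
    ultimately show "(if bit (n l) j \<and> cube_point (Suc k) (\<lambda>l. 2 * m l + \<sigma> l) l j then - 1 else 1) =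
         (if bit (n l) j \<and> cube_point k m l j then -1 else (1::real))"
      unfolding cube_point_def by auto
  qed
qed

definition Crank :: "('d::finite \<Rightarrow> dyadic) set \<Rightarrow> nat \<Rightarrow> ('d \<Rightarrow> nat) \<Rightarrow> real" where
  "Crank F k n = (\<Sum>m\<in>{m. \<forall>l. m l < 2 ^ k}. walsh_cube k n m * tauF F k m)"

lemma rank_step:
  fixes n :: "'d::finite \<Rightarrow> nat"
  assumes n: "\<forall>l. n l < 2 ^ k"
  shows "Crank F (Suc k) n = Crank F k n"
proof -
  let ?B = "\<lambda>k. {m::'d \<Rightarrow> nat. \<forall>l. m l < 2 ^ k}"
  let ?f = "\<lambda>m. walsh_cube (Suc k) n m * tauF F (Suc k) m"
  have "Crank F (Suc k) n = (\<Sum>p\<in>?B k \<times> child_signs. ?f (\<lambda>l. 2 * fst p l + snd p l))"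
    unfolding Crank_def
  proof (rule sum.reindex_bij_witness[where i="\<lambda>p l. 2 * fst p l + snd p l"
        and j="\<lambda>m. (\<lambda>l. m l div 2, \<lambda>l. m l mod 2)"])
    fix a :: "'d \<Rightarrow> nat" assume a: "a \<in> ?B (Suc k)"
    show "(\<lambda>l. 2 * fst (\<lambda>l. a l div 2, \<lambda>l. a l mod 2) l + snd (\<lambda>l. a l div 2, \<lambda>l. a l mod 2) l) = a"
      by auto
    show "(\<lambda>l. a l div 2, \<lambda>l. a l mod 2) \<in> ?B k \<times> child_signs"
    proof (rule SigmaI)
      show "(\<lambda>l. a l div 2) \<in> ?B k"
      proof (intro CollectI allI)
        fix l
        have "a l < 2 ^ k * 2" using a by (simp add: mult.commute)
        then show "a l div 2 < 2 ^ k" by (simp add: less_mult_imp_div_less)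
      qed
      show "(\<lambda>l. a l mod 2) \<in> child_signs" unfolding child_signs_def
      proof (intro CollectI allI)
        fix l show "a l mod 2 \<le> 1" using mod_less_divisor[of 2 "a l"] by linarith
      qed
    qed
  next
    fix b :: "('d \<Rightarrow> nat) \<times> ('d \<Rightarrow> nat)" assume b: "b \<in> ?B k \<times> child_signs"
    then have s: "snd b \<in> child_signs" by auto
    have "(\<lambda>l. (2 * fst b l + snd b l) div 2) = fst b" using child_div[OF s] by metis
    moreover have "(\<lambda>l. (2 * fst b l + snd b l) mod 2) = snd b"
    proof
      fix l have "snd b l \<le> 1" using cs_le[OF s] .
      then show "(2 * fst b l + snd b l) mod 2 = snd b l" by (cases "snd b l") auto
    qed
    ultimately show "(\<lambda>l. (2 * fst b l + snd b l) div 2, \<lambda>l. (2 * fst b l + snd b l) mod 2) = b"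
      by (simp add: prod_eq_iff)
    show "(\<lambda>l. 2 * fst b l + snd b l) \<in> ?B (Suc k)"
    proof (intro CollectI allI)
      fix l
      have "fst b l < 2 ^ k" "snd b l \<le> 1" using b cs_le[OF s] by auto
      then show "2 * fst b l + snd b l < 2 ^ Suc k" by simp
    qed
  qed simp
  also have "\<dots> = (\<Sum>m\<in>?B k. \<Sum>\<sigma>\<in>child_signs. ?f (\<lambda>l. 2 * m l + \<sigma> l))"
    by (simp del: tauF.simps add: sum.cartesian_product')
  also have "\<dots> = (\<Sum>m\<in>?B k. walsh_cube k n m * (\<Sum>\<sigma>\<in>child_signs. tauF F (Suc k) (\<lambda>l. 2 * m l + \<sigma> l)))"
    by (intro sum.cong refl) (simp del: tauF.simps add: sum_distrib_left walsh_cube_child[OF n])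
  also have "\<dots> = Crank F k n"
    unfolding Crank_def by (simp del: tauF.simps add: tau_add[symmetric])
  finally show ?thesis .
qed

lemma rank_mono:
  fixes n :: "'d::finite \<Rightarrow> nat"
  assumes n: "\<forall>l. n l < 2 ^ k" and "k \<le> K"
  shows "Crank F K n = Crank F k n"
  using assms(2)
proof (induction K rule: dec_induct)
  case (step j)
  have "\<forall>l. n l < 2 ^ j" using n step(1)
    by (meson order_less_le_trans one_le_numeral power_increasing)
  then show ?case using rank_step[of n j F] step.IH by simp
qed simp

lemma fw_eq:
  fixes n :: "'d::finite \<Rightarrow> nat"
  assumes "\<forall>l. n l \<le> K"
  shows "fw_coeff (tauF F) n = Crank F K n"
proof -
  define k where "k = Max (range n)"
  have le: "n l \<le> k" for l unfolding k_def by (simp add: Max_ge)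
  have kK: "k \<le> K" unfolding k_def using assms by (simp add: Max_le_iff)
  have "\<forall>l. n l < 2 ^ k" using le by (meson le_less_trans less_exp)
  then have "Crank F K n = Crank F k n" using rank_mono kK by blast
  then show ?thesis unfolding fw_coeff_def Crank_def k_def Let_def by simp
qed


theorem corollary1:
  fixes F :: "('d::finite \<Rightarrow> dyadic) set" and g :: "'d \<Rightarrow> dyadic"
  assumes "CARD('d) \<ge> 2"
    and "F \<noteq> {}"
    and "closedin dyadic_topology F"
    and "g \<notin> F"
  shows "\<exists>w::nat. \<forall>M::'d \<Rightarrow> nat. (\<forall>l. M l \<ge> 1) \<longrightarrow>
           partial_sum (fw_coeff (tauF F)) (\<lambda>l. 2 ^ w * M l) g = 0"
proof -
  obtain w0 where w0: "\<And>h. (\<forall>l t. t < w0 \<longrightarrow> h l t = g l t) \<Longrightarrow> h \<notin> F"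
    using nbhd[OF assms(3,4)] by blast
  define w where "w = Suc w0"
  have wn: "h \<notin> F" if "\<forall>l t. t < w \<longrightarrow> h l t = g l t" for h
    using that w0 unfolding w_def by auto
  show ?thesis
  proof (rule exI[of _ w], intro allI impI)
    fix M :: "'d \<Rightarrow> nat"
    define K where "K = w + (\<Sum>l\<in>UNIV. 2 ^ w * M l)"
    let ?A = "{n::'d \<Rightarrow> nat. \<forall>l. n l < 2 ^ w * M l}"
    let ?B = "{m::'d \<Rightarrow> nat. \<forall>l. m l < 2 ^ K}"
    have Kn: "\<forall>l. n l \<le> K" if "n \<in> ?A" for n
    proof
      fix l
      have "2 ^ w * M l \<le> (\<Sum>l\<in>UNIV. 2 ^ w * M l)"
        by (rule member_le_sum) auto
      then show "n l \<le> K" using that unfolding K_def by (metis CollectD le_add2 le_trans less_imp_le)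
    qed
    have "partial_sum (fw_coeff (tauF F)) (\<lambda>l. 2 ^ w * M l) g
        = (\<Sum>n\<in>?A. Crank F K n * walsh_vec n g)"
      unfolding partial_sum_def by (intro sum.cong refl) (simp add: fw_eq[OF Kn])
    also have "\<dots> = (\<Sum>n\<in>?A. \<Sum>m\<in>?B. tauF F K m * walsh_vec n (cube_point K m) * walsh_vec n g)"
      unfolding Crank_def walsh_cube_def
      by (intro sum.cong refl) (simp add: sum_distrib_left sum_distrib_right mult_ac)
    also have "\<dots> = (\<Sum>m\<in>?B. \<Sum>n\<in>?A. tauF F K m * walsh_vec n (cube_point K m) * walsh_vec n g)"
      by (rule sum.swap)
    also have "\<dots> = 0"
    proof (rule sum.neutral, rule ballI)
      fix m assume "m \<in> ?B"
      show "(\<Sum>n\<in>?A. tauF F K m * walsh_vec n (cube_point K m) * walsh_vec n g) = 0"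
      proof (cases "\<exists>l0 t. t < w \<and> cube_point K m l0 t \<noteq> g l0 t")
        case True
        then obtain l0 t where "t < w" "cube_point K m l0 t \<noteq> g l0 t" by blast
        then show ?thesis by (rule sum_kills)
      next
        case False
        have "dyadic_cube K m \<inter> F = {}"
        proof (rule ccontr)
          assume "dyadic_cube K m \<inter> F \<noteq> {}"
          then obtain h where h: "h \<in> dyadic_cube K m" "h \<in> F" by blast
          have "\<forall>l t. t < w \<longrightarrow> h l t = g l t"
          proof (intro allI impI)
            fix l t assume t: "t < w"
            then have "t < K" unfolding K_def by simp
            then have "h l t = cube_point K m l t"
              using h(1) unfolding dyadic_cube_def dyadic_interval_def cube_point_def by auto
            then show "h l t = g l t" using False t by blast
          qed
          then show False using wn h(2) by blast
        qed
        then have "tauF F K m = 0" by (rule tau_zero)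
        then show ?thesis by simp
      qed
    qed
    finally show "partial_sum (fw_coeff (tauF F)) (\<lambda>l. 2 ^ w * M l) g = 0" .
  qed
qed

end
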